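(* Let $\mathcal{T}=(\mathbb{K}_i,\phi_i)$ be a tower with $\mathbb{K}_0=\emptyset$ whose maps are elementary inclusions or elementary contractions, with width $\omega=\max_i|\mathbb{K}_i|$. Run the streaming reduction algorithm described below on the stream obtained from the active small coning filtration of $\mathcal{T}$. Then at every moment during the algorithm, the number of columns stored in $M$ is at most $2\omega$.
   Context: Elementary inclusion: $\mathbb{K}_{i+1}=\mathbb{K}_i\cup\{\sigma\}$; elementary contraction of distinct vertices $u,v$: one of them, say $v$, disappears, $\phi_i(u)=\phi_i(v)=u$, identity elsewhere, $\mathbb{K}_{i+1}=\phi_i(\mathbb{K}_i)$. Active small coning construction: $\hat{\mathbb{K}}_0=\emptyset$; vertices flagged active/inactive (simplex active iff all its vertices are); inclusion of $\sigma$ adds $\sigma$ (new vertices active); contraction of $u,v$ adds $\{\{v\}\cup\tau:\tau\in\mathrm{Act}\overline{\mathrm{St}}(u,\hat{\mathbb{K}}_i)\}$ and marks $u$ inactive if $|\mathrm{Act}\overline{\mathrm{St}}(u,\hat{\mathbb{K}}_i)|\le|\mathrm{Act}\overline{\mathrm{St}}(v,\hat{\mathbb{K}}_i)|$ (symmetric otherwise), $\mathrm{Act}\overline{\mathrm{St}}(w,\hat{\mathbb{K}}_i)$ being the active simplices of $\hat{\mathbb{K}}_i$ in the closed star of $w$; the active simplices of $\hat{\mathbb{K}}_i$ form (a copy of) $\mathbb{K}_i$. Input stream: for $i=0,1,\dots$, elements (ADDITION, $\sigma$, facets of $\sigma$) for the simplices of $\hat{\mathbb{K}}_{i+1}\setminus\hat{\mathbb{K}}_i$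 in increasing dimension, and (INACTIVE, $\sigma$) for every simplex becoming inactive at step $i$; simplices indexed by stream position. Algorithm over $\mathbb{Z}_2$ with matrix $M$ stored as a dictionary of columns (sets of row indices; pivot = largest row index); a simplex is negative if its reduced column is nonzero. reduce_column($j$): delete row indices of column $j$ that are inactive and negative; then while column $j$ is nonzero and its pivot equals the pivot of another column $k<j$ in $M$, add column $k$ to column $j$. remove_row($\ell$): with $j$ the column of pivot $\ell$, add column $j$ to every other column of $M$ with an entry in row $\ell$, then delete column $j$ from $M$. Main loop: on ADDITION of $j$, insert its column and call reduce_column($j$); delete it if zero, otherwise report $(\ell,j)$ for its pivot $\ell$ and call remove_row($\ell$) if $\ell$ is inactive. On (INACTIVE, $\ell$), call remove_row($\ell$) if $\ell$ is a pivot of a column in $M$. *)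

theory Defs
  imports Main
begin

text \<open>A simplex is a finite nonempty set of vertices; a complex is a set of simplices.
  Elementary maps: inclusion of a simplex sigma, or contraction of vertices u, v
  (written Contr u v), where v disappears and is identified with u.\<close>

datatype 'v emap = Incl "'v set" | Contr 'v 'v

definition apply_emap :: "'v emap \<Rightarrow> 'v set set \<Rightarrow> 'v set set" where
  "apply_emap m K = (case m of
      Incl \<sigma> \<Rightarrow> K \<union> {\<sigma>}
    | Contr u v \<Rightarrow> (\<lambda>s. (\<lambda>x. if x = v then u else x) ` s) ` K)"

definition emap_ok :: "'v emap \<Rightarrow> 'v set set \<Rightarrow> bool" where
  "emap_ok m K = (case m of
      Incl \<sigma> \<Rightarrow> finite \<sigma> \<and> \<sigma> \<noteq> {} \<and> \<sigma> \<notin> K \<and> (\<forall>\<tau>. \<tau> \<subset> \<sigma> \<and> \<tau> \<noteq> {} \<longrightarrow> \<tau> \<in> K)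
    | Contr u v \<Rightarrow> u \<noteq> v \<and> {u} \<in> K \<and> {v} \<in> K)"

fun Kc :: "'v emap list \<Rightarrow> nat \<Rightarrow> 'v set set" where
  "Kc ms 0 = {}"
| "Kc ms (Suc i) = apply_emap (ms ! i) (Kc ms i)"

definition valid_tower :: "'v emap list \<Rightarrow> bool" where
  "valid_tower ms = (\<forall>i < length ms. emap_ok (ms ! i) (Kc ms i))"

definition width :: "'v emap list \<Rightarrow> nat" where
  "width ms = Max ((\<lambda>i. card (Kc ms i)) ` {0..length ms})"

text \<open>State of the coning construction: (hat K_i, active vertices, identification f of
  the vertices of K_i with the active vertices of hat K_i).  Hat vertices are natural
  numbers; the vertex created at step i is named i.\<close>

type_synonym 'v hstate = "nat set set \<times> nat set \<times> ('v \<Rightarrow> nat)"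

definition act_star :: "nat set set \<Rightarrow> nat set \<Rightarrow> nat \<Rightarrow> nat set set" where
  "act_star HK A w = {\<tau> \<in> HK. \<tau> \<subseteq> A \<and> (\<exists>\<rho> \<in> HK. w \<in> \<rho> \<and> \<tau> \<subseteq> \<rho>)}"

definition hat_step :: "nat \<Rightarrow> 'v emap \<Rightarrow> 'v set set \<Rightarrow> 'v hstate \<Rightarrow> 'v hstate" where
  "hat_step i m K st = (case st of (HK, A, f) \<Rightarrow>
     (case m of
        Incl \<sigma> \<Rightarrow>
          (let f' = (\<lambda>x. if x \<in> \<sigma> \<and> x \<notin> \<Union>K then i else f x)
           in (HK \<union> {f' ` \<sigma>}, A \<union> {f' x | x. x \<in> \<sigma> \<and> x \<notin> \<Union>K}, f'))
      | Contr u v \<Rightarrow>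
          (let a = f u; b = f v in
           if card (act_star HK A a) \<le> card (act_star HK A b)
           then (HK \<union> {insert b \<tau> | \<tau>. \<tau> \<in> act_star HK A a}, A - {a}, f(u := b))
           else (HK \<union> {insert a \<tau> | \<tau>. \<tau> \<in> act_star HK A b}, A - {b}, f(u := a)))))"

fun Hc :: "'v emap list \<Rightarrow> nat \<Rightarrow> 'v hstate" where
  "Hc ms 0 = ({}, {}, (\<lambda>_. 0))"
| "Hc ms (Suc i) = hat_step i (ms ! i) (Kc ms i) (Hc ms i)"

definition HK :: "'v emap list \<Rightarrow> nat \<Rightarrow> nat set set" where
  "HK ms i = fst (Hc ms i)"

definition Act :: "'v emap list \<Rightarrow> nat \<Rightarrow> nat set" where
  "Act ms i = fst (snd (Hc ms i))"

definition new_simps :: "'v emap list \<Rightarrow> nat \<Rightarrow> nat set set" where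
  "new_simps ms i = HK ms (Suc i) - HK ms i"

definition becoming_inactive :: "'v emap list \<Rightarrow> nat \<Rightarrow> nat set set" where
  "becoming_inactive ms i =
     {\<sigma> \<in> HK ms (Suc i). \<not> \<sigma> \<subseteq> Act ms (Suc i) \<and> (\<sigma> \<notin> HK ms i \<or> \<sigma> \<subseteq> Act ms i)}"

datatype 'a tag = TAdd 'a | TInact 'a

text \<open>Stream elements: ADDITION (facet indices), index = stream position; INACTIVE l.\<close>
datatype selem = SAdd "nat set" | SInact nat

definition facets :: "nat set \<Rightarrow> nat set set" where
  "facets \<sigma> = {\<sigma> - {x} | x. x \<in> \<sigma>} - {{}}"

definition spos :: "nat set tag list \<Rightarrow> nat set \<Rightarrow> nat" where
  "spos ts \<sigma> = (LEAST p. p < length ts \<and> ts ! p = TAdd \<sigma>)"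

definition enc :: "nat set tag list \<Rightarrow> selem list" where
  "enc ts = map (\<lambda>t. case t of
              TAdd \<sigma> \<Rightarrow> SAdd (spos ts ` facets \<sigma>)
            | TInact \<sigma> \<Rightarrow> SInact (spos ts \<sigma>)) ts"

definition is_stream :: "'v emap list \<Rightarrow> selem list \<Rightarrow> bool" where
  "is_stream ms S = (\<exists>adds inas.
     (\<forall>i < length ms.
        distinct (adds i) \<and> set (adds i) = new_simps ms i \<and> sorted (map card (adds i)) \<and>
        distinct (inas i) \<and> set (inas i) = becoming_inactive ms i) \<and>
     S = enc (concat (map (\<lambda>i. map TAdd (adds i) @ map TInact (inas i)) [0..<length ms])))"

type_synonym matrix = "nat \<Rightarrow> nat set option"

definition pivot :: "nat set \<Rightarrow> nat" where
  "pivot c = Max c"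

definition symdiff :: "nat set \<Rightarrow> nat set \<Rightarrow> nat set" where
  "symdiff c d = (c - d) \<union> (d - c)"

text \<open>remove_row l with j the column of pivot l.\<close>
definition remove_row :: "nat \<Rightarrow> nat \<Rightarrow> matrix \<Rightarrow> matrix" where
  "remove_row l j M = (\<lambda>k. if k = j then None else
      (case M k of None \<Rightarrow> None
       | Some c \<Rightarrow> if l \<in> c then Some (symdiff c (the (M j))) else Some c))"

datatype phase = Ready | Red nat

text \<open>Algorithm state: (next stream position, phase, M, negative indices, indices read as INACTIVE).\<close>
type_synonym astate = "nat \<times> phase \<times> matrix \<times> nat set \<times> nat set"

inductive astep :: "selem list \<Rightarrow> astate \<Rightarrow> astate \<Rightarrow> bool" for S where
  add: "\<lbrakk>n < length S; S ! n = SAdd F\<rbrakk> \<Longrightarrow>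
     astep S (n, Ready, M, Ng, In) (n, Red n, M(n \<mapsto> F - (In \<inter> Ng)), Ng, In)"
| red: "\<lbrakk>M j = Some c; c \<noteq> {}; k < j; M k = Some d; d \<noteq> {}; pivot d = pivot c\<rbrakk> \<Longrightarrow>
     astep S (n, Red j, M, Ng, In) (n, Red j, M(j \<mapsto> symdiff c d), Ng, In)"
| zero: "M j = Some {} \<Longrightarrow>
     astep S (n, Red j, M, Ng, In) (Suc n, Ready, M(j := None), Ng, In)"
| fin_act: "\<lbrakk>M j = Some c; c \<noteq> {};
     \<not> (\<exists>k d. k < j \<and> M k = Some d \<and> d \<noteq> {} \<and> pivot d = pivot c); pivot c \<notin> In\<rbrakk> \<Longrightarrow>
     astep S (n, Red j, M, Ng, In) (Suc n, Ready, M, insert j Ng, In)"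
| fin_inact: "\<lbrakk>M j = Some c; c \<noteq> {};
     \<not> (\<exists>k d. k < j \<and> M k = Some d \<and> d \<noteq> {} \<and> pivot d = pivot c); pivot c \<in> In;
     M i = Some e; e \<noteq> {}; pivot e = pivot c\<rbrakk> \<Longrightarrow>
     astep S (n, Red j, M, Ng, In) (Suc n, Ready, remove_row (pivot c) i M, insert j Ng, In)"
| inact_nopiv: "\<lbrakk>n < length S; S ! n = SInact l;
     \<not> (\<exists>i c. M i = Some c \<and> c \<noteq> {} \<and> pivot c = l)\<rbrakk> \<Longrightarrow>
     astep S (n, Ready, M, Ng, In) (Suc n, Ready, M, Ng, insert l In)"
| inact_piv: "\<lbrakk>n < length S; S ! n = SInact l; M i = Some c; c \<noteq> {}; pivot c = l\<rbrakk> \<Longrightarrow>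
     astep S (n, Ready, M, Ng, In) (Suc n, Ready, remove_row l i M, Ng, insert l In)"

definition init_state :: astate where
  "init_state = (0, Ready, Map.empty, {}, {})"

definition ncols :: "astate \<Rightarrow> nat" where
  "ncols s = (case s of (n, ph, M, Ng, In) \<Rightarrow> card (dom M))"

definition cols_finite :: "astate \<Rightarrow> bool" where
  "cols_finite s = (case s of (n, ph, M, Ng, In) \<Rightarrow> finite (dom M))"

end

theory Submission
  imports Defs
begin

definition hinv :: "nat \<Rightarrow> 'v set set \<Rightarrow> nat set set \<Rightarrow> nat set \<Rightarrow> ('v \<Rightarrow> nat) \<Rightarrow> bool" where
  "hinv i K H A f \<longleftrightarrow> finite H \<and> (\<forall>\<tau>\<in>H. finite \<tau> \<and> \<tau> \<noteq> {}) \<and> (\<forall>\<tau>\<in>H. \<forall>x\<in>\<tau>. x < i)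
    \<and> (\<forall>\<tau>\<in>H. Pow \<tau> - {{}} \<subseteq> H)
    \<and> inj_on f (\<Union>K) \<and> f ` \<Union>K \<subseteq> A \<and> (\<forall>s\<in>K. f ` s \<in> H)
    \<and> (\<forall>\<tau>\<in>H. \<tau> \<subseteq> A \<longrightarrow> (\<exists>s\<in>K. \<tau> = f ` s))"

lemma hinvD:
  assumes "hinv i K H A f"
  shows "finite H" "\<And>\<tau>. \<tau>\<in>H \<Longrightarrow> finite \<tau>" "\<And>\<tau>. \<tau>\<in>H \<Longrightarrow> \<tau> \<noteq> {}"
    "\<And>\<tau> x. \<tau>\<in>H \<Longrightarrow> x\<in>\<tau> \<Longrightarrow> x < i"
    "\<And>\<tau>. \<tau>\<in>H \<Longrightarrow> Pow \<tau> - {{}} \<subseteq> H"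
    "inj_on f (\<Union>K)" "f ` \<Union>K \<subseteq> A" "\<And>s. s\<in>K \<Longrightarrow> f ` s \<in> H"
    "\<And>\<tau>. \<tau>\<in>H \<Longrightarrow> \<tau> \<subseteq> A \<Longrightarrow> \<exists>s\<in>K. \<tau> = f ` s"
  using assms by (simp_all add: hinv_def)

lemma hinv_closed: "hinv i K H A f \<Longrightarrow> \<tau> \<in> H \<Longrightarrow> \<tau>' \<subseteq> \<tau> \<Longrightarrow> \<tau>' \<noteq> {} \<Longrightarrow> \<tau>' \<in> H"
proof -
  assume h: "hinv i K H A f" and t: "\<tau> \<in> H" "\<tau>' \<subseteq> \<tau>" "\<tau>' \<noteq> {}"
  have "Pow \<tau> - {{}} \<subseteq> H" using hinvD(5)[OF h t(1)] .
  moreover have "\<tau>' \<in> Pow \<tau> - {{}}" using t by simp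
  ultimately show ?thesis by (rule subsetD)
qed

lemma hinvI:
  assumes "finite H" "\<And>\<tau>. \<tau>\<in>H \<Longrightarrow> finite \<tau> \<and> \<tau> \<noteq> {}"
    "\<And>\<tau> x. \<tau>\<in>H \<Longrightarrow> x\<in>\<tau> \<Longrightarrow> x < i"
    "\<And>\<tau> \<tau>'. \<tau>\<in>H \<Longrightarrow> \<tau>' \<subseteq> \<tau> \<Longrightarrow> \<tau>' \<noteq> {} \<Longrightarrow> \<tau>' \<in> H"
    "inj_on f (\<Union>K)" "f ` \<Union>K \<subseteq> A" "\<And>s. s\<in>K \<Longrightarrow> f ` s \<in> H"
    "\<And>\<tau>. \<tau>\<in>H \<Longrightarrow> \<tau> \<subseteq> A \<Longrightarrow> \<exists>s\<in>K. \<tau> = f ` s"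
  shows "hinv i K H A f"
proof -
  have "\<forall>\<tau>\<in>H. Pow \<tau> - {{}} \<subseteq> H"
  proof (intro ballI subsetI)
    fix \<tau> \<tau>' assume "\<tau> \<in> H" "\<tau>' \<in> Pow \<tau> - {{}}"
    thus "\<tau>' \<in> H" using assms(4)[of \<tau> \<tau>'] by simp
  qed
  thus ?thesis unfolding hinv_def using assms by simp
qed

lemma hinv_incl:
  assumes h: "hinv i K H A f" and ok: "emap_ok (Incl \<sigma>) K"
    and f'_def: "f' = (\<lambda>x. if x \<in> \<sigma> \<and> x \<notin> \<Union>K then i else f x)"
  shows "hinv (Suc i) (K \<union> {\<sigma>}) (H \<union> {f' ` \<sigma>}) (A \<union> {f' x | x. x \<in> \<sigma> \<and> x \<notin> \<Union>K}) f'"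
proof -
  from ok have fin\<sigma>: "finite \<sigma>" and ne\<sigma>: "\<sigma> \<noteq> {}" and sub: "\<And>\<tau>. \<tau> \<subset> \<sigma> \<Longrightarrow> \<tau> \<noteq> {} \<Longrightarrow> \<tau> \<in> K"
    by (auto simp: emap_ok_def)
  have single: "\<sigma> = {x}" if xx: "x \<in> \<sigma>" "x \<notin> \<Union>K" for x
  proof (rule ccontr)
    assume "\<sigma> \<noteq> {x}"
    then obtain y where "y \<in> \<sigma>" "y \<noteq> x" using xx by blast
    hence "{x} \<subset> \<sigma>" using xx by blast
    hence "{x} \<in> K" using sub by blast
    thus False using xx by blast
  qed
  have fK: "f x < i" if "x \<in> \<Union>K" for x
  proof -
    from that obtain s where "s \<in> K" "x \<in> s" by blast
    thus ?thesis using hinvD(4)[OF h hinvD(8)[OF h]] by blast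
  qed
  have f'K: "f' x = f x" if "x \<in> \<Union>K" for x using that f'_def by auto
  have imgK: "f' ` s = f ` s" if ss: "s \<subseteq> \<Union>K" for s
  proof (rule image_cong[OF refl])
    fix x assume "x \<in> s" thus "f' x = f x" using ss f'K by blast
  qed
  let ?A' = "A \<union> {f' x | x. x \<in> \<sigma> \<and> x \<notin> \<Union>K}"
  show ?thesis
  proof (rule hinvI)
    show "finite (H \<union> {f' ` \<sigma>})" using hinvD(1)[OF h] by simp
    show "finite \<tau> \<and> \<tau> \<noteq> {}" if "\<tau> \<in> H \<union> {f' ` \<sigma>}" for \<tau> using that hinvD(2,3)[OF h] fin\<sigma> ne\<sigma> by auto
    show "x < Suc i" if "\<tau> \<in> H \<union> {f' ` \<sigma>}" "x \<in> \<tau>" for \<tau> x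
    proof -
      note that
      then consider "\<tau> \<in> H" | "\<tau> = f' ` \<sigma>" by blast
      thus "x < Suc i"
      proof cases
        case 1 thus ?thesis using hinvD(4)[OF h] \<open>x \<in> \<tau>\<close> by fastforce
      next
        case 2 then obtain y where "y \<in> \<sigma>" "x = f' y" using \<open>x \<in> \<tau>\<close> by blast
        show ?thesis
        proof (cases "y \<in> \<Union>K")
          case True
          hence "f y < i" by (rule fK)
          thus ?thesis using True f'K \<open>x = f' y\<close> by simp
        next
          case False thus ?thesis using \<open>y \<in> \<sigma>\<close> \<open>x = f' y\<close> f'_def by simp
        qed
      qed
    qed
    show "\<tau>' \<in> H \<union> {f' ` \<sigma>}" if t: "\<tau> \<in> H \<union> {f' ` \<sigma>}" "\<tau>' \<subseteq> \<tau>" "\<tau>' \<noteq> {}" for \<tau> \<tau>'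
    proof -
      show "\<tau>' \<in> H \<union> {f' ` \<sigma>}"
      proof (cases "\<tau> \<in> H")
        case True thus ?thesis using hinv_closed[OF h] t by blast
      next
        case False
        hence te: "\<tau> = f' ` \<sigma>" using t by blast
        show ?thesis
        proof (cases "\<exists>x. x \<in> \<sigma> \<and> x \<notin> \<Union>K")
          case True
          then obtain x where "x \<in> \<sigma>" "x \<notin> \<Union>K" by blast
          hence "\<sigma> = {x}" using single by blast
          hence "\<tau>' = f' ` \<sigma>" using t te by auto
          thus ?thesis by blast
        next
          case False
          define \<sigma>' where "\<sigma>' = {y \<in> \<sigma>. f' y \<in> \<tau>'}"
          have e: "\<tau>' = f' ` \<sigma>'" using t te unfolding \<sigma>'_def by auto
          have "\<sigma>' \<noteq> {}" using e t by auto
          show ?thesis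
          proof (cases "\<sigma>' = \<sigma>")
            case True thus ?thesis using e by simp
          next
            case False
            hence "\<sigma>' \<subset> \<sigma>" unfolding \<sigma>'_def by blast
            hence "\<sigma>' \<in> K" using sub \<open>\<sigma>' \<noteq> {}\<close> by blast
            hence "f ` \<sigma>' \<in> H" using hinvD(8)[OF h] by simp
            moreover have "f' ` \<sigma>' = f ` \<sigma>'" using \<open>\<sigma>' \<in> K\<close> imgK by blast
            ultimately show ?thesis using e by simp
          qed
        qed
      qed
    qed
    show "inj_on f' (\<Union>(K \<union> {\<sigma>}))"
    proof (cases "\<exists>x. x \<in> \<sigma> \<and> x \<notin> \<Union>K")
      case True
      then obtain x where x: "x \<in> \<sigma>" "x \<notin> \<Union>K" by blast
      hence s: "\<sigma> = {x}" using single by blast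
      have "inj_on f' (\<Union>K)" using hinvD(6)[OF h] f'K inj_on_cong by metis
      moreover have "f' x \<notin> f' ` (\<Union>K)" using x f'_def fK by auto
      ultimately have "inj_on f' (insert x (\<Union>K))" using x(2) by simp
      moreover have "\<Union>(K \<union> {\<sigma>}) = insert x (\<Union>K)" using s by auto
      ultimately show ?thesis by simp
    next
      case False
      hence "\<Union>(K \<union> {\<sigma>}) = \<Union>K" by blast
      thus ?thesis using hinvD(6)[OF h] f'K inj_on_cong by metis
    qed
    show "f' ` \<Union>(K \<union> {\<sigma>}) \<subseteq> ?A'"
    proof
      fix y assume "y \<in> f' ` \<Union>(K \<union> {\<sigma>})"
      then obtain x where x: "x \<in> \<Union>(K \<union> {\<sigma>})" "y = f' x" by blast
      show "y \<in> ?A'"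
      proof (cases "x \<in> \<Union>K")
        case True thus ?thesis using x hinvD(7)[OF h] f'K by auto
      next
        case False thus ?thesis using x by auto
      qed
    qed
    show "f' ` s \<in> H \<union> {f' ` \<sigma>}" if "s \<in> K \<union> {\<sigma>}" for s
    proof -
      from that show "f' ` s \<in> H \<union> {f' ` \<sigma>}"
      proof
        assume "s \<in> K"
        hence "f' ` s = f ` s" using imgK by blast
        thus ?thesis using hinvD(8)[OF h] \<open>s \<in> K\<close> by simp
      qed simp
    qed
    show "\<exists>s\<in>K \<union> {\<sigma>}. \<tau> = f' ` s" if t: "\<tau> \<in> H \<union> {f' ` \<sigma>}" "\<tau> \<subseteq> ?A'" for \<tau>
    proof -
      show "\<exists>s\<in>K \<union> {\<sigma>}. \<tau> = f' ` s"
      proof (cases "\<tau> \<in> H")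
        case True
        have lt: "\<forall>x\<in>\<tau>. x < i" using hinvD(4)[OF h] True by blast
        have "\<tau> \<subseteq> A"
        proof
          fix y assume "y \<in> \<tau>"
          hence "y \<in> ?A'" "y < i" using t lt by auto
          thus "y \<in> A" using f'_def by auto
        qed
        then obtain s where "s \<in> K" "\<tau> = f ` s" using hinvD(9)[OF h] True by blast
        moreover have "f' ` s = f ` s" using imgK \<open>s \<in> K\<close> by blast
        ultimately show ?thesis by blast
      next
        case False thus ?thesis using t by blast
      qed
    qed
  qed
qed

lemma hinv_contr:
  assumes h: "hinv i K H A f" and uv: "u \<noteq> v" "{u} \<in> K" "{v} \<in> K"
    and xs: "(xp = u \<and> xq = v) \<or> (xp = v \<and> xq = u)"
    and pd: "p = f xp" and qd: "q = f xq"
    and f'd: "\<And>x. x \<in> \<Union>K \<Longrightarrow> f' (if x = v then u else x) = (if x = u \<or> x = v then q else f x)"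
  shows "hinv (Suc i) ((\<lambda>s. (\<lambda>x. if x = v then u else x) ` s) ` K)
           (H \<union> {insert q \<tau> | \<tau>. \<tau> \<in> act_star H A p}) (A - {p}) f'"
proof -
  define c where "c = (\<lambda>x::'a. if x = v then u else x)"
  define g where "g = (\<lambda>x. if x = u \<or> x = v then q else f x)"
  define N where "N = {insert q \<tau> | \<tau>. \<tau> \<in> act_star H A p}"
  have inj: "inj_on f (\<Union>K)" by (rule hinvD(6)[OF h])
  have uK: "u \<in> \<Union>K" and vK: "v \<in> \<Union>K" using uv by auto
  have xpK: "xp \<in> \<Union>K" and xqK: "xq \<in> \<Union>K" and xpq: "xp \<noteq> xq" using xs uK vK uv by auto
  have xpK1: "{xp} \<in> K" and xqK1: "{xq} \<in> K" using xs uv by auto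
  have pq: "p \<noteq> q"
  proof
    assume "p = q" hence "f xp = f xq" using pd qd by simp
    hence "xp = xq" using inj_onD[OF inj _ xpK xqK] by blast
    thus False using xpq by simp
  qed
  have fA: "f x \<in> A" if "x \<in> \<Union>K" for x using hinvD(7)[OF h] that by blast
  have pA: "p \<in> A" and qA: "q \<in> A" using fA xpK xqK pd qd by auto
  have qH: "{q} \<in> H" using hinvD(8)[OF h xqK1] qd by simp
  have pH: "{p} \<in> H" using hinvD(8)[OF h xpK1] pd by simp
  have fp: "x = xp" if "x \<in> \<Union>K" "f x = p" for x using inj_onD[OF inj _ that(1) xpK] that(2) pd by simp
  have fq: "x = xq" if "x \<in> \<Union>K" "f x = q" for x using inj_onD[OF inj _ that(1) xqK] that(2) qd by simp
  have img: "f' ` (c ` s) = g ` s" if "s \<subseteq> \<Union>K" for s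
  proof -
    have "f' ` (c ` s) = (\<lambda>x. f' (c x)) ` s" by (simp add: image_image)
    also have "\<dots> = g ` s"
    proof (rule image_cong[OF refl])
      fix x assume "x \<in> s" hence "x \<in> \<Union>K" using that by blast
      thus "f' (c x) = g x" using f'd[of x] unfolding c_def g_def by simp
    qed
    finally show ?thesis .
  qed
  have gs1: "g ` s = f ` s" if "s \<subseteq> \<Union>K" "xp \<notin> s" for s
  proof (rule image_cong[OF refl])
    fix x assume "x \<in> s"
    thus "g x = f x" using that xs qd unfolding g_def by auto
  qed
  have gs2: "g ` s = insert q (f ` (s - {xp}))" if "s \<subseteq> \<Union>K" "xp \<in> s" for s
  proof -
    have "g ` s = insert (g xp) (g ` (s - {xp}))" using that by blast
    moreover have "g xp = q" using xs unfolding g_def by auto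
    moreover have "g ` (s - {xp}) = f ` (s - {xp})" using gs1[of "s - {xp}"] that by blast
    ultimately show ?thesis by simp
  qed
  have UK': "\<Union>((\<lambda>s. c ` s) ` K) = c ` \<Union>K" by blast
  have Nact: "N = insert q ` act_star H A p" unfolding N_def by blast
  have actH: "act_star H A p \<subseteq> H" unfolding act_star_def by blast
  have act_mem: "\<tau> \<in> act_star H A p" if "\<tau> \<in> H" "\<tau> \<subseteq> A" "\<rho> \<in> H" "p \<in> \<rho>" "\<tau> \<subseteq> \<rho>" for \<tau> \<rho>
    using that unfolding act_star_def by blast
  have act_D: "\<tau> \<in> H \<and> \<tau> \<subseteq> A \<and> (\<exists>\<rho>\<in>H. p \<in> \<rho> \<and> \<tau> \<subseteq> \<rho>)" if "\<tau> \<in> act_star H A p" for \<tau>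
    using that unfolding act_star_def by blast
  have goal: "hinv (Suc i) ((\<lambda>s. c ` s) ` K) (H \<union> N) (A - {p}) f'"
  proof (rule hinvI)
    have "finite (act_star H A p)" using finite_subset[OF actH hinvD(1)[OF h]] .
    thus "finite (H \<union> N)" unfolding Nact using hinvD(1)[OF h] by simp
    show "finite \<tau> \<and> \<tau> \<noteq> {}" if "\<tau> \<in> H \<union> N" for \<tau>
      using that hinvD(2,3)[OF h] actH unfolding Nact by blast
    show "x < Suc i" if "\<tau> \<in> H \<union> N" "x \<in> \<tau>" for \<tau> x
    proof -
      have qi: "q < i" using hinvD(4)[OF h qH] by simp
      from that consider "\<tau> \<in> H" | \<tau>0 where "\<tau>0 \<in> act_star H A p" "\<tau> = insert q \<tau>0"
        unfolding Nact by blast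
      thus ?thesis
      proof cases
        case 1 thus ?thesis using hinvD(4)[OF h 1 that(2)] by simp
      next
        case 2
        show ?thesis
        proof (cases "x = q")
          case True thus ?thesis using qi by simp
        next
          case False hence "x \<in> \<tau>0" using 2 that(2) by simp
          moreover have "\<tau>0 \<in> H" using 2 actH by blast
          ultimately show ?thesis using hinvD(4)[OF h] by fastforce
        qed
      qed
    qed
    show "\<tau>' \<in> H \<union> N" if t: "\<tau> \<in> H \<union> N" "\<tau>' \<subseteq> \<tau>" "\<tau>' \<noteq> {}" for \<tau> \<tau>'
    proof -
      from t(1) consider "\<tau> \<in> H" | \<tau>0 where "\<tau>0 \<in> act_star H A p" "\<tau> = insert q \<tau>0"
        unfolding Nact by blast
      thus ?thesis
      proof cases
        case 1 thus ?thesis using hinv_closed[OF h 1 t(2,3)] by simp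
      next
        case 2
        from act_D[OF 2(1)] obtain \<rho> where r: "\<tau>0 \<in> H" "\<tau>0 \<subseteq> A" "\<rho> \<in> H" "p \<in> \<rho>" "\<tau>0 \<subseteq> \<rho>" by blast
        show ?thesis
        proof (cases "q \<in> \<tau>'")
          case False
          hence "\<tau>' \<subseteq> \<tau>0" using t 2 by blast
          thus ?thesis using hinv_closed[OF h r(1) _ t(3)] by simp
        next
          case True
          show ?thesis
          proof (cases "\<tau>' - {q} = {}")
            case True
            hence "\<tau>' = {q}" using \<open>q \<in> \<tau>'\<close> by blast
            thus ?thesis using qH by simp
          next
            case False
            have sub: "\<tau>' - {q} \<subseteq> \<tau>0" using t 2 by blast
            hence "\<tau>' - {q} \<in> H" using hinv_closed[OF h r(1) _ False] by simp
            hence "\<tau>' - {q} \<in> act_star H A p" using act_mem r sub by blast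
            moreover have "\<tau>' = insert q (\<tau>' - {q})" using True by blast
            ultimately show ?thesis unfolding Nact by blast
          qed
        qed
      qed
    qed
    show "inj_on f' (\<Union>((\<lambda>s. c ` s) ` K))"
      unfolding UK'
    proof (rule inj_onI)
      fix y1 y2 assume y: "y1 \<in> c ` \<Union>K" "y2 \<in> c ` \<Union>K" "f' y1 = f' y2"
      then obtain x1 x2 where x: "x1 \<in> \<Union>K" "x2 \<in> \<Union>K" "y1 = c x1" "y2 = c x2" by blast
      have e1: "f' y1 = g x1" using f'd[OF x(1)] x(3) unfolding c_def g_def by simp
      have e2: "f' y2 = g x2" using f'd[OF x(2)] x(4) unfolding c_def g_def by simp
      have e: "g x1 = g x2" using e1 e2 y(3) by simp
      show "y1 = y2"
      proof (cases "x1 = u \<or> x1 = v")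
        case True note t1 = True
        show ?thesis
        proof (cases "x2 = u \<or> x2 = v")
          case True thus ?thesis using t1 x unfolding c_def by auto
        next
          case False
          hence "f x2 = q" using e t1 unfolding g_def by simp
          hence "x2 = xq" using fq x(2) by blast
          thus ?thesis using False xs by auto
        qed
      next
        case False note f1 = False
        show ?thesis
        proof (cases "x2 = u \<or> x2 = v")
          case True
          hence "f x1 = q" using e f1 unfolding g_def by simp
          hence "x1 = xq" using fq x(1) by blast
          thus ?thesis using f1 xs by auto
        next
          case False
          hence "f x1 = f x2" using e f1 unfolding g_def by simp
          hence "x1 = x2" using inj_onD[OF inj _ x(1) x(2)] by simp
          thus ?thesis using x by simp
        qed
      qed
    qed
    show "f' ` \<Union>((\<lambda>s. c ` s) ` K) \<subseteq> A - {p}"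
      unfolding UK'
    proof
      fix y assume "y \<in> f' ` (c ` \<Union>K)"
      then obtain x where x: "x \<in> \<Union>K" "y = f' (c x)" by blast
      hence y: "y = g x" using f'd[OF x(1)] unfolding c_def g_def by simp
      show "y \<in> A - {p}"
      proof (cases "x = u \<or> x = v")
        case True thus ?thesis using y qA pq unfolding g_def by simp
      next
        case False
        hence "x \<noteq> xp" using xs by auto
        hence "f x \<noteq> p" using fp x(1) by blast
        thus ?thesis using y False fA x(1) unfolding g_def by simp
      qed
    qed
    show "f' ` s' \<in> H \<union> N" if "s' \<in> (\<lambda>s. c ` s) ` K" for s'
    proof -
      from that obtain s where s: "s \<in> K" "s' = c ` s" by blast
      have sK: "s \<subseteq> \<Union>K" using s by blast
      have e: "f' ` s' = g ` s" using img[OF sK] s by simp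
      show ?thesis
      proof (cases "xp \<in> s")
        case False thus ?thesis using gs1[OF sK] e hinvD(8)[OF h s(1)] by simp
      next
        case True
        have e2: "f' ` s' = insert q (f ` (s - {xp}))" using e gs2[OF sK True] by simp
        show ?thesis
        proof (cases "s - {xp} = {}")
          case True
          hence fe: "f ` (s - {xp}) = {}" by simp
          have "f' ` s' = {q}" using e2 unfolding fe .
          thus ?thesis using qH by simp
        next
          case False
          have fsH: "f ` s \<in> H" by (rule hinvD(8)[OF h s(1)])
          have ne: "f ` (s - {xp}) \<noteq> {}" using False by simp
          have "f ` (s - {xp}) \<in> H" by (rule hinv_closed[OF h fsH _ ne]) blast
          moreover have "f ` (s - {xp}) \<subseteq> A" using fA sK by blast
          moreover have "p \<in> f ` s" using True pd by simp
          ultimately have "f ` (s - {xp}) \<in> act_star H A p" using act_mem[OF _ _ fsH] by blast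
          thus ?thesis using e2 unfolding Nact by blast
        qed
      qed
    qed
    show "\<exists>s'\<in>(\<lambda>s. c ` s) ` K. \<tau>' = f' ` s'" if t: "\<tau>' \<in> H \<union> N" "\<tau>' \<subseteq> A - {p}" for \<tau>'
    proof -
      from t(1) consider "\<tau>' \<in> H" | \<tau> where "\<tau> \<in> act_star H A p" "\<tau>' = insert q \<tau>"
        unfolding Nact by blast
      thus ?thesis
      proof cases
        case 1
        then obtain s where s: "s \<in> K" "\<tau>' = f ` s" using hinvD(9)[OF h] t(2) by blast
        have sK: "s \<subseteq> \<Union>K" using s by blast
        have "xp \<notin> s" using s t(2) pd by auto
        hence "\<tau>' = f' ` (c ` s)" using img[OF sK] gs1[OF sK] s by simp
        thus ?thesis using s by blast
      next
        case 2
        from act_D[OF 2(1)] obtain \<rho> where r: "\<tau> \<in> H" "\<tau> \<subseteq> A" "\<rho> \<in> H" "p \<in> \<rho>" "\<tau> \<subseteq> \<rho>" by blast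
        have pt: "p \<notin> \<tau>" using t(2) 2 by blast
        have "insert p \<tau> \<subseteq> \<rho>" using r by blast
        hence "insert p \<tau> \<in> H" using hinv_closed[OF h r(3)] by simp
        moreover have "insert p \<tau> \<subseteq> A" using r pA by blast
        ultimately obtain tt where tt: "tt \<in> K" "insert p \<tau> = f ` tt" using hinvD(9)[OF h] by blast
        have ttK: "tt \<subseteq> \<Union>K" using tt by blast
        have "p \<in> f ` tt" using tt by blast
        then obtain x where "x \<in> tt" "f x = p" by blast
        hence xp: "xp \<in> tt" using fp ttK by blast
        have "f ` (tt - {xp}) = f ` tt - f ` {xp}"
          by (rule inj_on_image_set_diff[OF inj]) (use ttK xpK in blast)+
        also have "\<dots> = \<tau>" using tt pt pd by auto
        finally have "f' ` (c ` tt) = insert q \<tau>" using img[OF ttK] gs2[OF ttK xp] by simp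
        thus ?thesis using tt 2 by blast
      qed
    qed
  qed
  thus ?thesis unfolding c_def N_def .
qed


lemma Kc_finite: "finite (Kc ms i)"
  by (induction i) (auto simp: apply_emap_def split: emap.splits)

lemma hat_step_mono: "fst (hat_step i m K (H, A, f)) \<supseteq> H"
  by (auto simp: hat_step_def Let_def split: emap.splits)

lemma HK_Suc_mono: "HK ms i \<subseteq> HK ms (Suc i)"
proof -
  obtain H A f where e: "Hc ms i = (H, A, f)" by (cases "Hc ms i") auto
  show ?thesis using hat_step_mono[of H i "ms ! i" "Kc ms i" A f] e by (simp add: HK_def)
qed

lemma HK_mono: "i \<le> j \<Longrightarrow> HK ms i \<subseteq> HK ms j"
  by (induction j rule: dec_induct) (use HK_Suc_mono in blast)+

lemma HK_0: "HK ms 0 = {}" by (simp add: HK_def)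

lemma hinv_Hc:
  assumes v: "valid_tower ms"
  shows "i \<le> length ms \<Longrightarrow> hinv i (Kc ms i) (HK ms i) (Act ms i) (snd (snd (Hc ms i)))"
proof (induction i)
  case 0
  show ?case by (rule hinvI) (simp_all add: HK_def Act_def)
next
  case (Suc i)
  hence il: "i < length ms" by simp
  obtain H A f where e: "Hc ms i = (H, A, f)" by (cases "Hc ms i") auto
  have h: "hinv i (Kc ms i) H A f" using Suc e il by (simp add: HK_def Act_def)
  have ok: "emap_ok (ms ! i) (Kc ms i)" using v il by (simp add: valid_tower_def)
  show ?case
  proof (cases "ms ! i")
    case (Incl \<sigma>)
    define f' where "f' = (\<lambda>x. if x \<in> \<sigma> \<and> x \<notin> \<Union>(Kc ms i) then i else f x)"
    have hs: "Hc ms (Suc i) = (HK ms i \<union> {f' ` \<sigma>}, A \<union> {f' x | x. x \<in> \<sigma> \<and> x \<notin> \<Union>(Kc ms i)}, f')"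
      using e Incl by (simp add: hat_step_def Let_def f'_def HK_def)
    have "hinv (Suc i) (Kc ms i \<union> {\<sigma>}) (H \<union> {f' ` \<sigma>}) (A \<union> {f' x | x. x \<in> \<sigma> \<and> x \<notin> \<Union>(Kc ms i)}) f'"
      by (rule hinv_incl[OF h _ f'_def]) (use ok Incl in simp)
    thus ?thesis using hs Incl e by (simp add: HK_def Act_def apply_emap_def)
  next
    case (Contr u v)
    have uv: "u \<noteq> v" "{u} \<in> Kc ms i" "{v} \<in> Kc ms i" using ok Contr by (auto simp: emap_ok_def)
    have Kd: "Kc ms (Suc i) = (\<lambda>s. (\<lambda>x. if x = v then u else x) ` s) ` Kc ms i"
      using Contr by (simp add: apply_emap_def)
    show ?thesis
    proof (cases "card (act_star H A (f u)) \<le> card (act_star H A (f v))")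
      case True
      have hs: "Hc ms (Suc i) = (H \<union> {insert (f v) \<tau> | \<tau>. \<tau> \<in> act_star H A (f u)}, A - {f u}, f(u := f v))"
        using e Contr True by (simp add: hat_step_def Let_def)
      have "hinv (Suc i) ((\<lambda>s. (\<lambda>x. if x = v then u else x) ` s) ` Kc ms i)
           (H \<union> {insert (f v) \<tau> | \<tau>. \<tau> \<in> act_star H A (f u)}) (A - {f u}) (f(u := f v))"
        by (rule hinv_contr[OF h uv, of u v]) (use uv in auto)
      moreover have "HK ms (Suc i) = fst (Hc ms (Suc i))" "Act ms (Suc i) = fst (snd (Hc ms (Suc i)))"
        by (simp_all add: HK_def Act_def)
      ultimately show ?thesis unfolding Kd hs by (simp add: fun_upd_def)
    next
      case False
      have hs: "Hc ms (Suc i) = (H \<union> {insert (f u) \<tau> | \<tau>. \<tau> \<in> act_star H A (f v)}, A - {f v}, f(u := f u))"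
        using e Contr False by (simp add: hat_step_def Let_def)
      have "hinv (Suc i) ((\<lambda>s. (\<lambda>x. if x = v then u else x) ` s) ` Kc ms i)
           (H \<union> {insert (f u) \<tau> | \<tau>. \<tau> \<in> act_star H A (f v)}) (A - {f v}) (f(u := f u))"
        by (rule hinv_contr[OF h uv, of v u]) (use uv in auto)
      moreover have "HK ms (Suc i) = fst (Hc ms (Suc i))" "Act ms (Suc i) = fst (snd (Hc ms (Suc i)))"
        by (simp_all add: HK_def Act_def)
      ultimately show ?thesis unfolding Kd hs by (simp add: fun_upd_def)
    qed
  qed
qed

definition actv :: "'v emap list \<Rightarrow> nat \<Rightarrow> nat set set" where
  "actv ms i = {\<tau> \<in> HK ms i. \<tau> \<subseteq> Act ms i}"

lemma actv_card:
  assumes "valid_tower ms" "i \<le> length ms"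
  shows "finite (actv ms i) \<and> card (actv ms i) \<le> card (Kc ms i)"
proof -
  have h: "hinv i (Kc ms i) (HK ms i) (Act ms i) (snd (snd (Hc ms i)))" using hinv_Hc assms by blast
  have "actv ms i \<subseteq> (\<lambda>s. snd (snd (Hc ms i)) ` s) ` Kc ms i"
    using hinvD(9)[OF h] unfolding actv_def by blast
  moreover have "finite (Kc ms i)" by (rule Kc_finite)
  ultimately have fi: "finite ((\<lambda>s. snd (snd (Hc ms i)) ` s) ` Kc ms i)"
    and sb: "actv ms i \<subseteq> (\<lambda>s. snd (snd (Hc ms i)) ` s) ` Kc ms i" and fK: "finite (Kc ms i)" by auto
  have "card (actv ms i) \<le> card ((\<lambda>s. snd (snd (Hc ms i)) ` s) ` Kc ms i)" by (rule card_mono[OF fi sb])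
  also have "\<dots> \<le> card (Kc ms i)" by (rule card_image_le[OF fK])
  finally show ?thesis using finite_subset[OF sb fi] by simp
qed

lemma Kc_width: "i \<le> length ms \<Longrightarrow> card (Kc ms i) \<le> width ms"
  unfolding width_def by (rule Max_ge) auto

lemma new_card:
  assumes v: "valid_tower ms" and il: "i < length ms"
  shows "finite (new_simps ms i) \<and> card (new_simps ms i) \<le> width ms"
proof -
  obtain H A f where e: "Hc ms i = (H, A, f)" by (cases "Hc ms i") auto
  have HH: "HK ms i = H" "Act ms i = A" using e by (simp_all add: HK_def Act_def)
  have ok: "emap_ok (ms ! i) (Kc ms i)" using v il by (simp add: valid_tower_def)
  have aK: "finite (actv ms i) \<and> card (actv ms i) \<le> card (Kc ms i)" using actv_card[OF v] il by simp
  have Kw: "card (Kc ms i) \<le> width ms" by (rule Kc_width) (use il in simp)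
  have Kw': "card (Kc ms (Suc i)) \<le> width ms" by (rule Kc_width) (use il in simp)
  have ast: "act_star H A p \<subseteq> actv ms i" for p unfolding act_star_def actv_def HH by blast
  have conebound: "finite X \<and> card X \<le> width ms" if "X \<subseteq> insert q ` act_star H A p" for X q p
  proof -
    have fa: "finite (act_star H A p)" using ast aK finite_subset by blast
    have "card X \<le> card (insert q ` act_star H A p)" using that fa by (simp add: card_mono)
    also have "\<dots> \<le> card (act_star H A p)" using card_image_le fa by blast
    also have "\<dots> \<le> card (actv ms i)" using ast aK by (simp add: card_mono)
    finally have "card X \<le> card (actv ms i)" .
    moreover have "finite X" by (rule finite_subset[OF that]) (use fa in simp)
    ultimately show ?thesis using aK Kw by simp
  qed
  show ?thesis
  proof (cases "ms ! i")
    case (Incl \<sigma>)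
    define f' where "f' = (\<lambda>x. if x \<in> \<sigma> \<and> x \<notin> \<Union>(Kc ms i) then i else f x)"
    have hs: "HK ms (Suc i) = H \<union> {f' ` \<sigma>}"
      using e Incl by (simp add: hat_step_def Let_def f'_def HK_def)
    have sub: "new_simps ms i \<subseteq> {f' ` \<sigma>}" unfolding new_simps_def hs HH by blast
    have "\<sigma> \<in> Kc ms (Suc i)" using Incl by (simp add: apply_emap_def)
    hence "0 < card (Kc ms (Suc i))" using Kc_finite[of ms "Suc i"] card_gt_0_iff by blast
    moreover have "card (new_simps ms i) \<le> card {f' ` \<sigma>}" by (rule card_mono[OF _ sub]) simp
    hence "card (new_simps ms i) \<le> 1" by simp
    moreover have "finite (new_simps ms i)" using sub finite_subset by blast
    ultimately show ?thesis using Kw' by simp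
  next
    case (Contr u v)
    show ?thesis
    proof (cases "card (act_star H A (f u)) \<le> card (act_star H A (f v))")
      case True
      have hs: "HK ms (Suc i) = H \<union> {insert (f v) \<tau> | \<tau>. \<tau> \<in> act_star H A (f u)}"
        using e Contr True by (simp add: hat_step_def Let_def HK_def)
      have "new_simps ms i \<subseteq> insert (f v) ` act_star H A (f u)" unfolding new_simps_def hs HH by blast
      thus ?thesis by (rule conebound)
    next
      case False
      have hs: "HK ms (Suc i) = H \<union> {insert (f u) \<tau> | \<tau>. \<tau> \<in> act_star H A (f v)}"
        using e Contr False by (simp add: hat_step_def Let_def HK_def)
      have "new_simps ms i \<subseteq> insert (f u) ` act_star H A (f v)" unfolding new_simps_def hs HH by blast
      thus ?thesis by (rule conebound)
    qed
  qed
qed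

lemma HK_new: "\<sigma> \<in> HK ms i \<Longrightarrow> \<exists>i'<i. \<sigma> \<in> new_simps ms i'"
proof (induction i)
  case 0 thus ?case by (simp add: HK_0)
next
  case (Suc i)
  show ?case
  proof (cases "\<sigma> \<in> HK ms i")
    case True thus ?thesis using Suc.IH less_Suc_eq by blast
  next
    case False thus ?thesis using Suc.prems unfolding new_simps_def by blast
  qed
qed

lemma HK_inactive: "\<sigma> \<in> HK ms i \<Longrightarrow> \<not> \<sigma> \<subseteq> Act ms i \<Longrightarrow> \<exists>i'<i. \<sigma> \<in> becoming_inactive ms i'"
proof (induction i)
  case 0 thus ?case by (simp add: HK_0)
next
  case (Suc i)
  show ?case
  proof (cases "\<sigma> \<in> HK ms i \<and> \<not> \<sigma> \<subseteq> Act ms i")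
    case True thus ?thesis using Suc.IH less_Suc_eq by blast
  next
    case False thus ?thesis using Suc.prems unfolding becoming_inactive_def by blast
  qed
qed

lemma new_disj: "i < j \<Longrightarrow> \<sigma> \<in> new_simps ms i \<Longrightarrow> \<sigma> \<notin> new_simps ms j"
  using HK_mono[of "Suc i" j ms] unfolding new_simps_def by auto

lemma closed_HK:
  assumes "valid_tower ms" "i \<le> length ms" "\<tau> \<in> HK ms i" "\<tau>' \<subseteq> \<tau>" "\<tau>' \<noteq> {}"
  shows "\<tau>' \<in> HK ms i" "finite \<tau>"
  using hinv_closed[OF hinv_Hc[OF assms(1,2)] assms(3-5)] hinvD(2)[OF hinv_Hc[OF assms(1,2)] assms(3)] by auto


lemma concat_split:
  "n < length (concat xs) \<Longrightarrow> \<exists>i r. i < length xs \<and> r < length (xs!i) \<and> n = length (concat (take i xs)) + r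
     \<and> take n (concat xs) = concat (take i xs) @ take r (xs!i) \<and> concat xs ! n = xs!i!r"
proof (induction xs arbitrary: n)
  case Nil thus ?case by simp
next
  case (Cons x xs)
  show ?case
  proof (cases "n < length x")
    case True
    hence "0 < length (x # xs) \<and> n < length ((x#xs)!0) \<and> n = length (concat (take 0 (x#xs))) + n
      \<and> take n (concat (x#xs)) = concat (take 0 (x#xs)) @ take n ((x#xs)!0) \<and> concat (x#xs) ! n = (x#xs)!0!n"
      by (simp add: nth_append)
    thus ?thesis by blast
  next
    case False
    hence "n - length x < length (concat xs)" using Cons.prems by simp
    from Cons.IH[OF this] obtain i r where ir: "i < length xs" "r < length (xs!i)"
      "n - length x = length (concat (take i xs)) + r"
      "take (n - length x) (concat xs) = concat (take i xs) @ take r (xs!i)" "concat xs ! (n - length x) = xs!i!r"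
      by blast
    have "Suc i < length (x#xs) \<and> r < length ((x#xs)!Suc i) \<and> n = length (concat (take (Suc i) (x#xs))) + r
      \<and> take n (concat (x#xs)) = concat (take (Suc i) (x#xs)) @ take r ((x#xs)!Suc i) \<and> concat (x#xs) ! n = (x#xs)!Suc i!r"
      using ir False by (simp add: nth_append)
    thus ?thesis by blast
  qed
qed

lemma concat_nth:
  assumes "i < length xs" "r < length (xs!i)"
  shows "length (concat (take i xs)) + r < length (concat xs) \<and> concat xs ! (length (concat (take i xs)) + r) = xs!i!r"
proof -
  have e: "xs = take i xs @ xs!i # drop (Suc i) xs" using assms(1) by (rule id_take_nth_drop)
  have "concat xs = concat (take i xs) @ xs!i @ concat (drop (Suc i) xs)"
    by (subst e) simp
  thus ?thesis using assms(2) by (simp add: nth_append)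
qed

lemma concat_take_mono:
  assumes "i < j" "j \<le> length xs"
  shows "length (concat (take i xs)) + length (xs!i) \<le> length (concat (take j xs))"
proof -
  have il: "i < length (take j xs)" using assms by simp
  have "take j xs = take i (take j xs) @ (take j xs)!i # drop (Suc i) (take j xs)"
    by (rule id_take_nth_drop[OF il])
  also have "take i (take j xs) = take i xs" using assms by (simp add: min_def)
  also have "(take j xs)!i = xs!i" using assms by simp
  finally have "length (concat (take j xs)) = length (concat (take i xs @ xs!i # drop (Suc i) (take j xs)))"
    by (rule arg_cong)
  thus ?thesis by simp
qed

locale strm =
  fixes ms :: "'v emap list" and adds inas :: "nat \<Rightarrow> nat set list"
  assumes vt: "valid_tower ms"
  and ad: "\<And>i. i < length ms \<Longrightarrow> distinct (adds i) \<and> set (adds i) = new_simps ms i \<and> sorted (map card (adds i))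
            \<and> distinct (inas i) \<and> set (inas i) = becoming_inactive ms i"
begin

definition blk :: "nat \<Rightarrow> nat set tag list" where "blk i = map TAdd (adds i) @ map TInact (inas i)"
definition xs :: "nat set tag list list" where "xs = map blk [0..<length ms]"
definition T :: "nat set tag list" where "T = concat xs"
definition base :: "nat \<Rightarrow> nat" where "base i = length (concat (take i xs))"

lemma xs_len: "length xs = length ms" by (simp add: xs_def)
lemma xs_nth: "i < length ms \<Longrightarrow> xs ! i = blk i" by (simp add: xs_def)
lemma take_xs: "i \<le> length ms \<Longrightarrow> take i xs = map blk [0..<i]" by (simp add: xs_def take_map)

lemma blk_add: "r < length (blk i) \<Longrightarrow> blk i ! r = TAdd \<sigma> \<Longrightarrow> r < length (adds i) \<and> adds i ! r = \<sigma>"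
  by (auto simp: blk_def nth_append split: if_splits)

lemma blk_add2: "r < length (adds i) \<Longrightarrow> blk i ! r = TAdd (adds i ! r) \<and> r < length (blk i)"
  by (auto simp: blk_def nth_append)

lemma set_blk: "set (blk i) = TAdd ` set (adds i) \<union> TInact ` set (inas i)"
  by (simp add: blk_def)

lemma set_T: "set T = (\<Union>i<length ms. set (blk i))"
  by (auto simp: T_def xs_def)

lemma pos_add: "p < length T \<Longrightarrow> T!p = TAdd \<sigma> \<Longrightarrow>
  \<exists>i r. i < length ms \<and> r < length (adds i) \<and> adds i ! r = \<sigma> \<and> p = base i + r"
proof -
  assume a: "p < length T" "T!p = TAdd \<sigma>"
  have "p < length (concat xs)" using a by (simp add: T_def)
  from concat_split[OF this] obtain i r where ir: "i < length xs" "r < length (xs!i)"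
    "p = length (concat (take i xs)) + r" "concat xs ! p = xs!i!r" by blast
  have il: "i < length ms" using ir xs_len by simp
  have "r < length (blk i)" "blk i ! r = TAdd \<sigma>" using a ir xs_nth[OF il] by (simp_all add: T_def)
  hence "r < length (adds i) \<and> adds i ! r = \<sigma>" by (rule blk_add)
  moreover have "p = base i + r" using ir by (simp add: base_def)
  ultimately show ?thesis using il by blast
qed

lemma add_pos: "i < length ms \<Longrightarrow> r < length (adds i) \<Longrightarrow> base i + r < length T \<and> T ! (base i + r) = TAdd (adds i ! r)"
proof -
  assume a: "i < length ms" "r < length (adds i)"
  have b: "blk i ! r = TAdd (adds i ! r) \<and> r < length (blk i)" by (rule blk_add2[OF a(2)])
  have "i < length xs" "r < length (xs!i)" using a b xs_nth[OF a(1)] xs_len by simp_all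
  from concat_nth[OF this] show ?thesis using b xs_nth[OF a(1)] unfolding T_def base_def by simp
qed

lemma base_lt: "i < j \<Longrightarrow> j \<le> length ms \<Longrightarrow> r < length (adds i) \<Longrightarrow> base i + r < base j"
proof -
  assume a: "i < j" "j \<le> length ms" "r < length (adds i)"
  have "base i + length (xs!i) \<le> base j" using concat_take_mono[of i j xs] a xs_len unfolding base_def by simp
  moreover have "r < length (xs!i)" using a blk_add2 xs_nth by simp
  ultimately show ?thesis by simp
qed

lemma add_unique: "p < length T \<Longrightarrow> q < length T \<Longrightarrow> T!p = TAdd \<sigma> \<Longrightarrow> T!q = TAdd \<sigma> \<Longrightarrow> p = q"
proof -
  assume a: "p < length T" "q < length T" "T!p = TAdd \<sigma>" "T!q = TAdd \<sigma>"
  obtain i r where ir: "i < length ms" "r < length (adds i)" "adds i ! r = \<sigma>" "p = base i + r"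
    using pos_add a by blast
  obtain j s where js: "j < length ms" "s < length (adds j)" "adds j ! s = \<sigma>" "q = base j + s"
    using pos_add a by blast
  have si: "\<sigma> \<in> new_simps ms i" using ad[OF ir(1)] ir nth_mem by metis
  have sj: "\<sigma> \<in> new_simps ms j" using ad[OF js(1)] js nth_mem by metis
  have "i = j"
  proof (rule ccontr)
    assume "i \<noteq> j"
    hence "i < j \<or> j < i" by arith
    thus False using new_disj[of i j \<sigma> ms] new_disj[of j i \<sigma> ms] si sj by blast
  qed
  moreover have "r = s"
  proof -
    have d: "distinct (adds i)" using ad[OF ir(1)] by simp
    have "adds i ! r = adds i ! s" using ir js \<open>i = j\<close> by simp
    moreover have "(adds i ! r = adds i ! s) = (r = s)"
      by (rule nth_eq_iff_index_eq[OF d ir(2)]) (use js(2) \<open>i = j\<close> in simp)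
    ultimately show ?thesis by simp
  qed
  ultimately show ?thesis using ir js by simp
qed

lemma spos_eq: "p < length T \<Longrightarrow> T!p = TAdd \<sigma> \<Longrightarrow> spos T \<sigma> = p"
proof -
  assume a: "p < length T" "T!p = TAdd \<sigma>"
  show ?thesis unfolding spos_def
  proof (rule Least_equality)
    show "p < length T \<and> T ! p = TAdd \<sigma>" using a by simp
    fix y assume "y < length T \<and> T ! y = TAdd \<sigma>"
    hence "y = p" using add_unique[of y p \<sigma>] a by blast
    thus "p \<le> y" by simp
  qed
qed

lemma new_pos: "i < length ms \<Longrightarrow> \<sigma> \<in> new_simps ms i \<Longrightarrow> \<exists>r < length (adds i). adds i ! r = \<sigma>"
  using ad by (metis in_set_conv_nth)

lemma facet_before:
  assumes p: "p < length T" "T!p = TAdd \<sigma>" and \<phi>: "\<phi> \<in> facets \<sigma>"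
  shows "spos T \<phi> < p \<and> T ! (spos T \<phi>) = TAdd \<phi>"
proof -
  obtain i r where ir: "i < length ms" "r < length (adds i)" "adds i ! r = \<sigma>" "p = base i + r"
    using pos_add p by blast
  have sn: "\<sigma> \<in> new_simps ms i" using ad[OF ir(1)] ir nth_mem by metis
  hence sH: "\<sigma> \<in> HK ms (Suc i)" by (simp add: new_simps_def)
  from \<phi> obtain x where x: "x \<in> \<sigma>" "\<phi> = \<sigma> - {x}" "\<phi> \<noteq> {}" unfolding facets_def by blast
  have il: "Suc i \<le> length ms" using ir by simp
  have \<phi>H: "\<phi> \<in> HK ms (Suc i)" using closed_HK(1)[OF vt il sH _ x(3)] x by blast
  have fin: "finite \<sigma>" using closed_HK(2)[OF vt il sH, of \<sigma>] x by blast
  have cardlt: "card \<phi> < card \<sigma>" using card_Diff1_less[OF fin x(1)] x(2) by simp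
  have "\<exists>q < p. q < length T \<and> T!q = TAdd \<phi>"
  proof (cases "\<phi> \<in> HK ms i")
    case True
    then obtain i' where i': "i' < i" "\<phi> \<in> new_simps ms i'" using HK_new by blast
    then obtain r' where r': "r' < length (adds i')" "adds i' ! r' = \<phi>" using new_pos ir by (meson less_trans)
    have "base i' + r' < base i" using base_lt[OF i'(1) _ r'(1)] ir by simp
    moreover have "base i \<le> p" using ir by simp
    moreover have "i' < length ms" using i' ir by simp
    ultimately show ?thesis using add_pos[of i' r'] r' by force
  next
    case False
    hence "\<phi> \<in> new_simps ms i" using \<phi>H by (simp add: new_simps_def)
    then obtain r' where r': "r' < length (adds i)" "adds i ! r' = \<phi>" using new_pos ir by blast
    have "r' < r"
    proof (rule ccontr)
      assume "\<not> r' < r" hence "r \<le> r'" by simp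
      have so: "sorted (map card (adds i))" using ad[OF ir(1)] by simp
      have "map card (adds i) ! r \<le> map card (adds i) ! r'"
        by (rule sorted_nth_mono[OF so \<open>r \<le> r'\<close>]) (use r' in simp)
      thus False using cardlt r' ir by simp
    qed
    hence "base i + r' < p" using ir by simp
    moreover have "base i + r' < length T \<and> T ! (base i + r') = TAdd \<phi>" using add_pos[of i r'] r' ir by simp
    ultimately show ?thesis by blast
  qed
  then obtain q where q: "q < p" "q < length T" "T!q = TAdd \<phi>" by blast
  have "spos T \<phi> = q" by (rule spos_eq[OF q(2,3)])
  thus ?thesis using q by simp
qed

lemma inact_added: "TInact \<sigma> \<in> set T \<Longrightarrow> \<exists>p < length T. T!p = TAdd \<sigma>"
proof -
  assume "TInact \<sigma> \<in> set T"
  then obtain i where i: "i < length ms" "\<sigma> \<in> set (inas i)" unfolding set_T set_blk by blast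
  hence "\<sigma> \<in> HK ms (Suc i)" using ad[OF i(1)] by (simp add: becoming_inactive_def)
  then obtain i' where i': "i' < Suc i" "\<sigma> \<in> new_simps ms i'" using HK_new by blast
  hence il: "i' < length ms" using i by simp
  obtain r where "r < length (adds i')" "adds i' ! r = \<sigma>" using new_pos[OF il i'(2)] by blast
  thus ?thesis using add_pos[OF il] by blast
qed

definition Alv :: "nat set tag list \<Rightarrow> nat set set" where
  "Alv P = {\<sigma>. TAdd \<sigma> \<in> set P \<and> TInact \<sigma> \<notin> set P}"

lemma alive_prefix:
  assumes "i \<le> length ms"
  shows "Alv (concat (map blk [0..<i]) @ Q) \<subseteq> actv ms i \<union> {\<sigma>. TAdd \<sigma> \<in> set Q}"
proof
  fix \<sigma> assume "\<sigma> \<in> Alv (concat (map blk [0..<i]) @ Q)"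
  hence a: "TAdd \<sigma> \<in> set (concat (map blk [0..<i])) \<or> TAdd \<sigma> \<in> set Q"
    "TInact \<sigma> \<notin> set (concat (map blk [0..<i]))" unfolding Alv_def by auto
  show "\<sigma> \<in> actv ms i \<union> {\<sigma>. TAdd \<sigma> \<in> set Q}"
  proof (cases "TAdd \<sigma> \<in> set Q")
    case True thus ?thesis by simp
  next
    case False
    then obtain i' where i': "i' < i" "TAdd \<sigma> \<in> set (blk i')" using a by auto
    hence "\<sigma> \<in> set (adds i')" by (auto simp: set_blk)
    hence "\<sigma> \<in> new_simps ms i'" using ad i' assms by auto
    hence sH: "\<sigma> \<in> HK ms i" using HK_mono[of "Suc i'" i ms] i' unfolding new_simps_def by auto
    have "\<sigma> \<subseteq> Act ms i"
    proof (rule ccontr)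
      assume "\<not> \<sigma> \<subseteq> Act ms i"
      then obtain i'' where i'': "i'' < i" "\<sigma> \<in> becoming_inactive ms i''" using HK_inactive sH by blast
      hence "\<sigma> \<in> set (inas i'')" using ad assms by auto
      hence "TInact \<sigma> \<in> set (blk i'')" by (simp add: set_blk)
      thus False using a(2) i'' by auto
    qed
    thus ?thesis using sH unfolding actv_def by simp
  qed
qed

lemma alive:
  assumes n: "n \<le> length T"
  shows "\<exists>X. finite X \<and> card X \<le> 2 * width ms \<and> Alv (take n T) \<subseteq> X
     \<and> (\<forall>\<sigma>. n < length T \<longrightarrow> T!n = TAdd \<sigma> \<longrightarrow> \<sigma> \<in> X)"
proof (cases "n = length T")
  case True
  have L: "length ms \<le> length ms" by simp
  have e: "take n T = concat (map blk [0..<length ms]) @ []" using True by (simp add: T_def xs_def)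
  have "Alv (take n T) \<subseteq> actv ms (length ms)" using alive_prefix[OF L, of "[]"] e by simp
  moreover have "finite (actv ms (length ms)) \<and> card (actv ms (length ms)) \<le> card (Kc ms (length ms))"
    using actv_card[OF vt L] .
  moreover have "card (Kc ms (length ms)) \<le> width ms" using Kc_width[OF L] .
  ultimately show ?thesis using True by (intro exI[of _ "actv ms (length ms)"]) auto
next
  case False
  hence nl: "n < length T" using n by simp
  from concat_split[of n xs] nl obtain i r where ir: "i < length xs" "r < length (xs!i)"
    "take n T = concat (take i xs) @ take r (xs!i)" "T ! n = xs!i!r" unfolding T_def by blast
  have il: "i < length ms" using ir xs_len by simp
  have e: "take n T = concat (map blk [0..<i]) @ take r (blk i)" using ir il take_xs xs_nth by simp
  have "Alv (take n T) \<subseteq> actv ms i \<union> {\<sigma>. TAdd \<sigma> \<in> set (take r (blk i))}"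
    using alive_prefix[of i "take r (blk i)"] il e by simp
  also have "\<dots> \<subseteq> actv ms i \<union> new_simps ms i"
    using ad[OF il] set_take_subset[of r "blk i"] by (auto simp: set_blk)
  finally have A1: "Alv (take n T) \<subseteq> actv ms i \<union> new_simps ms i" .
  have A2: "\<sigma> \<in> actv ms i \<union> new_simps ms i" if "T!n = TAdd \<sigma>" for \<sigma>
  proof -
    have "blk i ! r = TAdd \<sigma>" "r < length (blk i)" using ir that xs_nth il by auto
    hence "r < length (adds i) \<and> adds i ! r = \<sigma>" using blk_add by blast
    hence "\<sigma> \<in> set (adds i)" using nth_mem by metis
    thus ?thesis using ad[OF il] by simp
  qed
  have c1: "finite (actv ms i) \<and> card (actv ms i) \<le> card (Kc ms i)" using actv_card[OF vt] il by simp
  have c2: "card (Kc ms i) \<le> width ms" by (rule Kc_width) (use il in simp)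
  have c3: "finite (new_simps ms i) \<and> card (new_simps ms i) \<le> width ms" by (rule new_card[OF vt il])
  have "card (actv ms i \<union> new_simps ms i) \<le> card (actv ms i) + card (new_simps ms i)" by (rule card_Un_le)
  hence "card (actv ms i \<union> new_simps ms i) \<le> 2 * width ms" using c1 c2 c3 by simp
  thus ?thesis using A1 A2 c1 c3 by (intro exI[of _ "actv ms i \<union> new_simps ms i"]) auto
qed

end


definition good :: "matrix \<Rightarrow> nat set \<Rightarrow> nat set \<Rightarrow> bool" where
  "good M D In \<longleftrightarrow> (\<forall>k\<in>D. \<exists>c. M k = Some c \<and> c \<noteq> {} \<and> pivot c \<notin> In) \<and> inj_on (\<lambda>k. pivot (the (M k))) D"

lemma good_cong: "good M D In \<Longrightarrow> (\<And>k. k \<in> D \<Longrightarrow> M' k = M k) \<Longrightarrow> good M' D In"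
proof -
  assume g: "good M D In" and e: "\<And>k. k \<in> D \<Longrightarrow> M' k = M k"
  have "inj_on (\<lambda>k. pivot (the (M' k))) D = inj_on (\<lambda>k. pivot (the (M k))) D"
    by (rule inj_on_cong) (simp add: e)
  thus ?thesis using g e unfolding good_def by simp
qed

lemma good_sub: "good M D In \<Longrightarrow> D' \<subseteq> D \<Longrightarrow> good M D' In"
  unfolding good_def by (meson inj_on_subset subsetD)

lemma rr_col:
  assumes "M i = Some ci" "finite ci" "pivot ci = l" "k \<noteq> i" "M k = Some c" "finite c" "c \<noteq> {}" "pivot c \<noteq> l"
  shows "\<exists>c'. remove_row l i M k = Some c' \<and> c' \<noteq> {} \<and> pivot c' = pivot c"
proof (cases "l \<in> c")
  case False thus ?thesis using assms by (simp add: remove_row_def)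
next
  case True
  have e: "remove_row l i M k = Some (symdiff c ci)" using assms True by (simp add: remove_row_def)
  have "l \<le> Max c" using Max_ge[OF assms(6) True] .
  hence lm: "l < Max c" using assms(8) unfolding pivot_def by simp
  have ci_le: "x \<le> l" if "x \<in> ci" for x using assms that Max_ge unfolding pivot_def by blast
  have mc: "Max c \<in> c" using assms Max_in by blast
  have mci: "Max c \<notin> ci" using ci_le lm by fastforce
  have ms: "Max c \<in> symdiff c ci" using mc mci unfolding symdiff_def by blast
  have fs: "finite (symdiff c ci)" using assms unfolding symdiff_def by simp
  have le: "x \<le> Max c" if "x \<in> symdiff c ci" for x
  proof -
    from that have "x \<in> c \<or> x \<in> ci" unfolding symdiff_def by blast
    thus ?thesis
    proof
      assume "x \<in> c" thus ?thesis using Max_ge assms by blast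
    next
      assume "x \<in> ci" thus ?thesis using ci_le lm by fastforce
    qed
  qed
  have "Max (symdiff c ci) = Max c" by (rule Max_eqI[OF fs le ms])
  thus ?thesis using e ms unfolding pivot_def by auto
qed

lemma rr_sub: "remove_row l i M k = Some c' \<Longrightarrow> \<exists>d. M k = Some d \<and> c' \<subseteq> d \<union> the (M i) \<and> k \<noteq> i"
  by (auto simp: remove_row_def symdiff_def split: option.splits if_splits)

lemma rr_dom: "dom (remove_row l i M) = dom M - {i}"
  by (auto simp: remove_row_def split: option.splits if_splits)

lemma good_rr:
  assumes g: "good M D In" and i: "i \<notin> D" "M i = Some ci" "finite ci"
    and fin: "\<And>k. k \<in> D \<Longrightarrow> finite (the (M k))"
    and np: "\<And>k. k \<in> D \<Longrightarrow> pivot (the (M k)) \<noteq> pivot ci"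
    and nin: "\<And>k. k \<in> D \<Longrightarrow> pivot (the (M k)) \<notin> In'"
  shows "good (remove_row (pivot ci) i M) D In'"
proof -
  have col: "\<exists>c'. remove_row (pivot ci) i M k = Some c' \<and> c' \<noteq> {} \<and> pivot c' = pivot (the (M k))" if k: "k \<in> D" for k
  proof -
    obtain c where c: "M k = Some c" "c \<noteq> {}" using g k unfolding good_def by blast
    have "k \<noteq> i" using k i by blast
    from rr_col[OF i(2,3) refl this c(1) _ c(2)] fin[OF k] np[OF k] c(1)
    show ?thesis by simp
  qed
  have "inj_on (\<lambda>k. pivot (the (remove_row (pivot ci) i M k))) D = inj_on (\<lambda>k. pivot (the (M k))) D"
  proof (rule inj_on_cong)
    fix k assume "k \<in> D"
    from col[OF this] show "pivot (the (remove_row (pivot ci) i M k)) = pivot (the (M k))" by auto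
  qed
  moreover have "\<forall>k\<in>D. \<exists>c. remove_row (pivot ci) i M k = Some c \<and> c \<noteq> {} \<and> pivot c \<notin> In'"
  proof
    fix k assume k: "k \<in> D"
    from col[OF k] obtain c' where "remove_row (pivot ci) i M k = Some c'" "c' \<noteq> {}" "pivot c' = pivot (the (M k))" by blast
    thus "\<exists>c. remove_row (pivot ci) i M k = Some c \<and> c \<noteq> {} \<and> pivot c \<notin> In'" using nin[OF k] by auto
  qed
  ultimately show ?thesis using g unfolding good_def by simp
qed

context strm begin

definition isadd :: "nat \<Rightarrow> bool" where "isadd p \<longleftrightarrow> p < length T \<and> (\<exists>\<sigma>. T!p = TAdd \<sigma>)"
definition InS :: "nat \<Rightarrow> nat set" where "InS n = {l. \<exists>p<n. enc T ! p = SInact l}"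

lemma enc_len: "length (enc T) = length T" by (simp add: enc_def)
lemma enc_nth: "p < length T \<Longrightarrow> enc T ! p = (case T!p of TAdd \<sigma> \<Rightarrow> SAdd (spos T ` facets \<sigma>) | TInact \<sigma> \<Rightarrow> SInact (spos T \<sigma>))"
  by (simp add: enc_def)

lemma enc_add: "p < length T \<Longrightarrow> enc T ! p = SAdd F \<Longrightarrow> \<exists>\<sigma>. T!p = TAdd \<sigma> \<and> F = spos T ` facets \<sigma>"
  by (auto simp: enc_nth split: tag.splits)

lemma enc_inact: "p < length T \<Longrightarrow> enc T ! p = SInact l \<Longrightarrow> \<exists>\<sigma>. T!p = TInact \<sigma> \<and> l = spos T \<sigma>"
  by (auto simp: enc_nth split: tag.splits)

lemma InS_add: "isadd n \<Longrightarrow> InS (Suc n) = InS n"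
proof -
  assume a: "isadd n"
  then obtain \<sigma> where "T!n = TAdd \<sigma>" "n < length T" unfolding isadd_def by blast
  hence "\<forall>l. enc T ! n \<noteq> SInact l" by (simp add: enc_nth)
  thus ?thesis unfolding InS_def using less_Suc_eq by auto
qed

lemma InS_inact: "n < length T \<Longrightarrow> enc T ! n = SInact l \<Longrightarrow> InS (Suc n) = insert l (InS n)"
  unfolding InS_def using less_Suc_eq by auto

lemma facets_ok: "n < length T \<Longrightarrow> enc T ! n = SAdd F \<Longrightarrow> F \<subseteq> {p. p < n \<and> isadd p} \<and> isadd n"
proof -
  assume a: "n < length T" "enc T ! n = SAdd F"
  from enc_add[OF a] obtain \<sigma> where s: "T!n = TAdd \<sigma>" "F = spos T ` facets \<sigma>" by blast
  have "F \<subseteq> {p. p < n \<and> isadd p}"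
  proof
    fix q assume "q \<in> F"
    then obtain \<phi> where \<phi>: "\<phi> \<in> facets \<sigma>" "q = spos T \<phi>" using s by blast
    from facet_before[OF a(1) s(1) \<phi>(1)] have "spos T \<phi> < n" "T ! spos T \<phi> = TAdd \<phi>" by auto
    thus "q \<in> {p. p < n \<and> isadd p}" using \<phi>(2) a(1) unfolding isadd_def by auto
  qed
  thus ?thesis using a s unfolding isadd_def by blast
qed

definition ainv :: "astate \<Rightarrow> bool" where
  "ainv s = (case s of (n, ph, M, Ng, In) \<Rightarrow>
     n \<le> length T \<and> In = InS n \<and> finite (dom M) \<and> (\<forall>k c. M k = Some c \<longrightarrow> c \<subseteq> {p. p < n \<and> isadd p}) \<and>
     (case ph of Ready \<Rightarrow> dom M \<subseteq> {..<n} \<and> good M (dom M) In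
       | Red j \<Rightarrow> j = n \<and> n < length T \<and> isadd n \<and> dom M \<subseteq> {..n} \<and> good M (dom M - {j}) In))"

lemma ainv_init: "ainv init_state"
  by (simp add: ainv_def init_state_def InS_def good_def)

lemma entries_mono: "(\<forall>k c. M k = Some c \<longrightarrow> c \<subseteq> {p. p < n \<and> isadd p}) \<Longrightarrow>
  (\<And>k c. M' k = Some c \<Longrightarrow> M k = Some c) \<Longrightarrow> (\<forall>k c. M' k = Some c \<longrightarrow> c \<subseteq> {p. p < Suc n \<and> isadd p})"
proof (intro allI impI)
  fix k c assume a: "\<forall>k c. M k = Some c \<longrightarrow> c \<subseteq> {p. p < n \<and> isadd p}" "\<And>k c. M' k = Some c \<Longrightarrow> M k = Some c" "M' k = Some c"
  hence "c \<subseteq> {p. p < n \<and> isadd p}" by blast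
  thus "c \<subseteq> {p. p < Suc n \<and> isadd p}" by auto
qed

lemma ainv_step: "astep (enc T) s s' \<Longrightarrow> ainv s \<Longrightarrow> ainv s'"
proof (induction rule: astep.induct)
  case (add n F M Ng In)
  have I: "n \<le> length T" "In = InS n" "finite (dom M)" "\<forall>k c. M k = Some c \<longrightarrow> c \<subseteq> {p. p < n \<and> isadd p}"
    "dom M \<subseteq> {..<n}" "good M (dom M) In" using add.prems by (clarsimp simp: ainv_def)+
  have nl: "n < length T" using add.hyps enc_len by simp
  have F: "F \<subseteq> {p. p < n \<and> isadd p}" "isadd n" using facets_ok[OF nl add.hyps(2)] by auto
  let ?M = "M(n \<mapsto> F - In \<inter> Ng)"
  have nd: "n \<notin> dom M" using I(5) by blast
  have d: "dom ?M - {n} = dom M" using nd by auto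
  have g: "good ?M (dom ?M - {n}) In" unfolding d by (rule good_cong[OF I(6)]) (use nd in auto)
  have e: "\<forall>k c. ?M k = Some c \<longrightarrow> c \<subseteq> {p. p < n \<and> isadd p}" using I(4) F by auto
  have "dom ?M \<subseteq> {..n}" using I(5) by auto
  thus ?case using I nl F g e by (simp add: ainv_def)
next
  case (red M j c k d n Ng In)
  have I: "n \<le> length T" "In = InS n" "finite (dom M)" "\<forall>k c. M k = Some c \<longrightarrow> c \<subseteq> {p. p < n \<and> isadd p}"
    "j = n" "n < length T" "isadd n" "dom M \<subseteq> {..n}" "good M (dom M - {j}) In" using red.prems by (clarsimp simp: ainv_def)+
  let ?M = "M(j \<mapsto> symdiff c d)"
  have dd: "dom ?M = dom M" using red.hyps by auto
  have g: "good ?M (dom ?M - {j}) In" unfolding dd by (rule good_cong[OF I(9)]) auto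
  have "symdiff c d \<subseteq> {p. p < n \<and> isadd p}" using I(4) red.hyps unfolding symdiff_def by blast
  hence e: "\<forall>k c. ?M k = Some c \<longrightarrow> c \<subseteq> {p. p < n \<and> isadd p}" using I(4) by auto
  show ?case using I g e dd by (simp add: ainv_def)
next
  case (zero M j n Ng In)
  have I: "n \<le> length T" "In = InS n" "finite (dom M)" "\<forall>k c. M k = Some c \<longrightarrow> c \<subseteq> {p. p < n \<and> isadd p}"
    "j = n" "n < length T" "isadd n" "dom M \<subseteq> {..n}" "good M (dom M - {j}) In" using zero.prems by (clarsimp simp: ainv_def)+
  let ?M = "M(j := None)"
  have dd: "dom ?M = dom M - {j}" by auto
  have g: "good ?M (dom ?M) In" unfolding dd by (rule good_cong[OF I(9)]) auto
  have e: "\<forall>k c. ?M k = Some c \<longrightarrow> c \<subseteq> {p. p < Suc n \<and> isadd p}"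
    by (rule entries_mono[OF I(4)]) (simp split: if_splits)
  have sub: "dom ?M \<subseteq> {..<Suc n}" using I(8) dd by auto
  have "InS (Suc n) = InS n" by (rule InS_add[OF I(7)])
  thus ?case using I g e sub by (simp add: ainv_def)
next
  case (fin_act M j c In n Ng)
  have I: "n \<le> length T" "In = InS n" "finite (dom M)" "\<forall>k c. M k = Some c \<longrightarrow> c \<subseteq> {p. p < n \<and> isadd p}"
    "j = n" "n < length T" "isadd n" "dom M \<subseteq> {..n}" "good M (dom M - {j}) In" using fin_act.prems by (clarsimp simp: ainv_def)+
  have jd: "j \<in> dom M" using fin_act.hyps by auto
  have ins: "dom M = insert j (dom M - {j})" using jd by auto
  have g: "good M (dom M) In"
  proof -
    have inj0: "inj_on (\<lambda>k. pivot (the (M k))) (dom M - {j})" using I(9) unfolding good_def by simp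
    have nn: "pivot (the (M j)) \<notin> (\<lambda>k. pivot (the (M k))) ` (dom M - {j})"
    proof
      assume "pivot (the (M j)) \<in> (\<lambda>k. pivot (the (M k))) ` (dom M - {j})"
      then obtain k where k: "pivot (the (M j)) = pivot (the (M k))" "k \<in> dom M - {j}" by (rule imageE)
      hence k2: "pivot (the (M k)) = pivot c" using fin_act.hyps(1) by simp
      obtain d where d: "M k = Some d" "d \<noteq> {}" using I(9) k unfolding good_def by blast
      have "k < j" using k I(8) I(5) by auto
      thus False using fin_act.hyps(3) d k2 by auto
    qed
    have "inj_on (\<lambda>k. pivot (the (M k))) (insert j (dom M - {j}))" by (subst inj_on_insert) (use inj0 nn in simp)
    moreover have "\<forall>k\<in>insert j (dom M - {j}). \<exists>c. M k = Some c \<and> c \<noteq> {} \<and> pivot c \<notin> In"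
      using I(9) fin_act.hyps unfolding good_def by auto
    ultimately have "good M (insert j (dom M - {j})) In" unfolding good_def by (intro conjI)
    thus ?thesis using ins[symmetric] by simp
  qed
  have e: "\<forall>k c. M k = Some c \<longrightarrow> c \<subseteq> {p. p < Suc n \<and> isadd p}"
    by (rule entries_mono[OF I(4)])
  have sub: "dom M \<subseteq> {..<Suc n}" using I(8) by auto
  have "InS (Suc n) = InS n" by (rule InS_add[OF I(7)])
  thus ?case using I g e sub by (simp add: ainv_def)
next
  case (fin_inact M j c In i e n Ng)
  have I: "n \<le> length T" "In = InS n" "finite (dom M)" "\<forall>k c. M k = Some c \<longrightarrow> c \<subseteq> {p. p < n \<and> isadd p}"
    "j = n" "n < length T" "isadd n" "dom M \<subseteq> {..n}" "good M (dom M - {j}) In" using fin_inact.prems by (clarsimp simp: ainv_def)+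
  have ij: "i = j"
  proof (rule ccontr)
    assume "i \<noteq> j"
    moreover have "i \<in> dom M" using fin_inact.hyps by auto
    ultimately have "i < j" using I(8) I(5) by auto
    thus False using fin_inact.hyps(3,5,6,7) by blast
  qed
  let ?M = "remove_row (pivot c) j M"
  have fc: "finite c" using I(4) fin_inact.hyps(1) finite_subset[of c "{..<n}"] by auto
  have g: "good ?M (dom M - {j}) In"
  proof (rule good_rr[OF I(9) _ fin_inact.hyps(1) fc])
    show "j \<notin> dom M - {j}" by simp
    fix k assume k: "k \<in> dom M - {j}"
    obtain d where d: "M k = Some d" "d \<noteq> {}" "pivot d \<notin> In" using I(9) k unfolding good_def by blast
    show "finite (the (M k))" using d I(4) finite_subset[of d "{..<n}"] by auto
    have "k < j" using k I(8) I(5) by auto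
    thus "pivot (the (M k)) \<noteq> pivot c" using fin_inact.hyps(3) d by auto
    show "pivot (the (M k)) \<notin> In" using d by simp
  qed
  have dd: "dom ?M = dom M - {j}" by (rule rr_dom)
  have e: "\<forall>k c'. ?M k = Some c' \<longrightarrow> c' \<subseteq> {p. p < Suc n \<and> isadd p}"
  proof (intro allI impI)
    fix k c' assume "?M k = Some c'"
    from rr_sub[OF this] obtain d where d: "M k = Some d" "c' \<subseteq> d \<union> the (M j)" by blast
    have "d \<subseteq> {p. p < n \<and> isadd p}" using I(4) d(1) by blast
    moreover have "c \<subseteq> {p. p < n \<and> isadd p}" using I(4) fin_inact.hyps(1) by blast
    ultimately have "c' \<subseteq> {p. p < n \<and> isadd p}" using d(2) fin_inact.hyps(1) by auto
    thus "c' \<subseteq> {p. p < Suc n \<and> isadd p}" by auto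
  qed
  have sub: "dom ?M \<subseteq> {..<Suc n}" using I(8) dd by auto
  have "InS (Suc n) = InS n" by (rule InS_add[OF I(7)])
  thus ?case using I g e sub dd ij fin_inact.hyps by (simp add: ainv_def)
next
  case (inact_nopiv n l M Ng In)
  have I: "n \<le> length T" "In = InS n" "finite (dom M)" "\<forall>k c. M k = Some c \<longrightarrow> c \<subseteq> {p. p < n \<and> isadd p}"
    "dom M \<subseteq> {..<n}" "good M (dom M) In" using inact_nopiv.prems by (clarsimp simp: ainv_def)+
  have nl: "n < length T" using inact_nopiv.hyps enc_len by simp
  have In': "InS (Suc n) = insert l (InS n)" by (rule InS_inact[OF nl inact_nopiv.hyps(2)])
  have g: "good M (dom M) (insert l In)"
    using I(6) inact_nopiv.hyps(3) unfolding good_def by blast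
  have e: "\<forall>k c. M k = Some c \<longrightarrow> c \<subseteq> {p. p < Suc n \<and> isadd p}"
    by (rule entries_mono[OF I(4)])
  have sub: "dom M \<subseteq> {..<Suc n}" using I(5) by auto
  show ?case using I g e sub In' nl by (simp add: ainv_def)
next
  case (inact_piv n l M i c Ng In)
  have I: "n \<le> length T" "In = InS n" "finite (dom M)" "\<forall>k c. M k = Some c \<longrightarrow> c \<subseteq> {p. p < n \<and> isadd p}"
    "dom M \<subseteq> {..<n}" "good M (dom M) In" using inact_piv.prems by (clarsimp simp: ainv_def)+
  have nl: "n < length T" using inact_piv.hyps enc_len by simp
  have In': "InS (Suc n) = insert l (InS n)" by (rule InS_inact[OF nl inact_piv.hyps(2)])
  have fc: "finite c" using I(4) inact_piv.hyps(3) finite_subset[of c "{..<n}"] by auto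
  have id: "i \<in> dom M" using inact_piv.hyps by auto
  have g: "good (remove_row (pivot c) i M) (dom M - {i}) (insert l In)"
  proof (rule good_rr[OF good_sub[OF I(6)] _ inact_piv.hyps(3) fc])
    show "dom M - {i} \<subseteq> dom M" by blast
    show "i \<notin> dom M - {i}" by simp
    fix k assume k: "k \<in> dom M - {i}"
    obtain d where d: "M k = Some d" "d \<noteq> {}" "pivot d \<notin> In" using I(6) k unfolding good_def by blast
    show "finite (the (M k))" using d I(4) finite_subset[of d "{..<n}"] by auto
    have inj: "inj_on (\<lambda>k. pivot (the (M k))) (dom M)" using I(6) unfolding good_def by simp
    have "pivot (the (M k)) \<noteq> pivot (the (M i))"
    proof
      assume "pivot (the (M k)) = pivot (the (M i))"
      hence "k = i" using inj_onD[OF inj _ _ id] k by blast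
      thus False using k by simp
    qed
    thus "pivot (the (M k)) \<noteq> pivot c" using inact_piv.hyps by simp
    thus "pivot (the (M k)) \<notin> insert l In" using d inact_piv.hyps by simp
  qed
  have dd: "dom (remove_row (pivot c) i M) = dom M - {i}" by (rule rr_dom)
  have e: "\<forall>k c'. remove_row (pivot c) i M k = Some c' \<longrightarrow> c' \<subseteq> {p. p < Suc n \<and> isadd p}"
  proof (intro allI impI)
    fix k c' assume "remove_row (pivot c) i M k = Some c'"
    from rr_sub[OF this] obtain d where d: "M k = Some d" "c' \<subseteq> d \<union> the (M i)" by blast
    have "d \<subseteq> {p. p < n \<and> isadd p}" using I(4) d(1) by blast
    moreover have "c \<subseteq> {p. p < n \<and> isadd p}" using I(4) inact_piv.hyps(3) by blast
    ultimately have "c' \<subseteq> {p. p < n \<and> isadd p}" using d(2) inact_piv.hyps(3) by auto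
    thus "c' \<subseteq> {p. p < Suc n \<and> isadd p}" by auto
  qed
  have sub: "dom (remove_row (pivot c) i M) \<subseteq> {..<Suc n}" using I(5) dd by auto
  show ?case using I g e sub dd In' nl inact_piv.hyps by (simp add: ainv_def)
qed

end


context strm begin

definition gsimp :: "nat \<Rightarrow> nat set" where
  "gsimp p = (case T!p of TAdd \<sigma> \<Rightarrow> \<sigma> | TInact \<sigma> \<Rightarrow> \<sigma>)"

lemma gsimp_add: "isadd p \<Longrightarrow> T!p = TAdd (gsimp p)"
  unfolding isadd_def gsimp_def by auto

lemma count_alive:
  assumes n: "n \<le> length T"
  defines "P \<equiv> {p. p < n \<and> isadd p \<and> p \<notin> InS n}"
  shows "finite P \<and> card P \<le> 2 * width ms \<and> (n < length T \<longrightarrow> isadd n \<longrightarrow> card (insert n P) \<le> 2 * width ms)"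
proof -
  obtain X where X: "finite X" "card X \<le> 2 * width ms" "Alv (take n T) \<subseteq> X"
     "\<And>\<sigma>. n < length T \<Longrightarrow> T!n = TAdd \<sigma> \<Longrightarrow> \<sigma> \<in> X" using alive[OF n] by blast
  have fP: "finite P" unfolding P_def by (rule finite_subset[of _ "{..<n}"]) auto
  have gP: "gsimp p \<in> X" if p: "p \<in> P" for p
  proof -
    have pn: "p < n" "isadd p" "p \<notin> InS n" using p unfolding P_def by auto
    have pl: "p < length T" using pn unfolding isadd_def by simp
    have tp: "T!p = TAdd (gsimp p)" using gsimp_add pn by simp
    have "take n T ! p = TAdd (gsimp p)" using tp pn by simp
    moreover have "p < length (take n T)" using pn n by simp
    ultimately have a1: "TAdd (gsimp p) \<in> set (take n T)" by (metis nth_mem)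
    have a2: "TInact (gsimp p) \<notin> set (take n T)"
    proof
      assume "TInact (gsimp p) \<in> set (take n T)"
      then obtain q where q: "q < length (take n T)" "take n T ! q = TInact (gsimp p)" unfolding in_set_conv_nth by blast
      have qn: "q < n" "q < length T" using q by auto
      have "T ! q = TInact (gsimp p)" using q qn by simp
      hence "enc T ! q = SInact (spos T (gsimp p))" using qn by (simp add: enc_nth)
      moreover have "spos T (gsimp p) = p" by (rule spos_eq[OF pl tp])
      ultimately have "p \<in> InS n" unfolding InS_def using qn by auto
      thus False using pn by simp
    qed
    have "gsimp p \<in> Alv (take n T)" unfolding Alv_def using a1 a2 by simp
    thus ?thesis using X(3) by blast
  qed
  have inj: "inj_on gsimp {p. isadd p}"
  proof (rule inj_onI)
    fix p q assume "p \<in> {p. isadd p}" "q \<in> {p. isadd p}" "gsimp p = gsimp q"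
    hence "isadd p" "isadd q" "gsimp p = gsimp q" by auto
    hence "T!p = TAdd (gsimp p)" "T!q = TAdd (gsimp p)" "p < length T" "q < length T"
      using gsimp_add[of p] gsimp_add[of q] unfolding isadd_def by auto
    thus "p = q" using add_unique[of p q "gsimp p"] by blast
  qed
  have cP: "card P \<le> card X"
  proof -
    have "card P = card (gsimp ` P)" by (rule card_image[symmetric]) (rule inj_on_subset[OF inj], auto simp: P_def)
    also have "\<dots> \<le> card X" by (rule card_mono[OF X(1)]) (use gP in blast)
    finally show ?thesis .
  qed
  have cQ: "card (insert n P) \<le> card X" if "n < length T" "isadd n"
  proof -
    have "card (insert n P) = card (gsimp ` insert n P)"
      by (rule card_image[symmetric]) (rule inj_on_subset[OF inj], use that in \<open>auto simp: P_def\<close>)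
    also have "\<dots> \<le> card X"
    proof (rule card_mono[OF X(1)])
      have "gsimp n \<in> X" using X(4)[OF that(1)] gsimp_add[OF that(2)] by simp
      thus "gsimp ` insert n P \<subseteq> X" using gP by blast
    qed
    finally show ?thesis .
  qed
  show ?thesis using fP cP cQ X(2) by auto
qed

lemma count:
  assumes a: "ainv s"
  shows "cols_finite s \<and> ncols s \<le> 2 * width ms"
proof -
  obtain n ph M Ng In where s: "s = (n, ph, M, Ng, In)" by (cases s) auto
  have I: "n \<le> length T" "In = InS n" "finite (dom M)" "\<forall>k c. M k = Some c \<longrightarrow> c \<subseteq> {p. p < n \<and> isadd p}"
    using a s by (simp_all add: ainv_def)
  define P where "P = {p. p < n \<and> isadd p \<and> p \<notin> InS n}"
  have CA: "finite P \<and> card P \<le> 2 * width ms \<and> (n < length T \<longrightarrow> isadd n \<longrightarrow> card (insert n P) \<le> 2 * width ms)"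
    using count_alive[OF I(1)] unfolding P_def by simp
  have piv: "card D \<le> card P" if g: "good M D In" and D: "D \<subseteq> dom M" for D
  proof -
    have fD: "finite D" using D I(3) finite_subset by blast
    have inj: "inj_on (\<lambda>k. pivot (the (M k))) D" using g unfolding good_def by simp
    have sub: "(\<lambda>k. pivot (the (M k))) ` D \<subseteq> P"
    proof
      fix x assume "x \<in> (\<lambda>k. pivot (the (M k))) ` D"
      then obtain k where k: "k \<in> D" "x = pivot (the (M k))" by blast
      obtain c where c: "M k = Some c" "c \<noteq> {}" "pivot c \<notin> In" using g k unfolding good_def by blast
      have cs: "c \<subseteq> {p. p < n \<and> isadd p}" using I(4) c(1) by blast
      have fc: "finite c" by (rule finite_subset[OF cs]) auto
      have "pivot c \<in> c" unfolding pivot_def using Max_in[OF fc c(2)] .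
      hence "pivot c \<in> P" using cs c(3) I(2) unfolding P_def by blast
      thus "x \<in> P" using k c by simp
    qed
    have "card D = card ((\<lambda>k. pivot (the (M k))) ` D)" by (rule card_image[symmetric, OF inj])
    also have "\<dots> \<le> card P" by (rule card_mono[OF _ sub]) (use CA in simp)
    finally show ?thesis .
  qed
  have "card (dom M) \<le> 2 * width ms"
  proof (cases ph)
    case Ready
    have g: "good M (dom M) In" using a s Ready by (clarsimp simp: ainv_def)
    thus ?thesis using piv[OF g] CA by simp
  next
    case (Red j)
    have R: "j = n" "n < length T" "isadd n" "good M (dom M - {j}) In" using a s Red by (clarsimp simp: ainv_def)+
    have c1: "card (dom M - {n}) \<le> card P" using piv[of "dom M - {n}"] R by blast
    have fd: "finite (dom M - {n})" using I(3) by simp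
    have "card (dom M) \<le> card (insert n (dom M - {n}))" by (rule card_mono) (use fd in auto)
    also have "\<dots> = card (dom M - {n}) + 1" using card_insert_disjoint[OF fd, of n] by simp
    finally have "card (dom M) \<le> card (dom M - {n}) + 1" .
    also have "\<dots> \<le> card P + 1" using c1 by simp
    also have "\<dots> = card (insert n P)" using CA unfolding P_def by simp
    also have "\<dots> \<le> 2 * width ms" using CA R by simp
    finally show ?thesis .
  qed
  thus ?thesis using s I(3) by (simp add: cols_finite_def ncols_def)
qed

end

theorem lemma19:
  fixes ms :: "'v emap list" and S :: "selem list" and s :: astate
  assumes "valid_tower ms"
    and "is_stream ms S"
    and "(astep S)\<^sup>*\<^sup>* init_state s"
  shows "cols_finite s \<and> ncols s \<le> 2 * width ms"
proof -
  from assms(2) obtain adds inas where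
    H: "\<forall>i < length ms. distinct (adds i) \<and> set (adds i) = new_simps ms i \<and> sorted (map card (adds i)) \<and>
        distinct (inas i) \<and> set (inas i) = becoming_inactive ms i" and
    S: "S = enc (concat (map (\<lambda>i. map TAdd (adds i) @ map TInact (inas i)) [0..<length ms]))"
    unfolding is_stream_def by blast
  interpret st: strm ms adds inas
  proof
    show "valid_tower ms" by (rule assms(1))
    fix i assume "i < length ms" thus "distinct (adds i) \<and> set (adds i) = new_simps ms i \<and> sorted (map card (adds i)) \<and>
        distinct (inas i) \<and> set (inas i) = becoming_inactive ms i" using H by blast
  qed
  have ST: "S = enc st.T" unfolding S st.T_def st.xs_def st.blk_def[abs_def] ..
  have "st.ainv s" using assms(3) unfolding ST
  proof (induction rule: rtranclp_induct)
    case base show ?case by (rule st.ainv_init)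
  next
    case (step y z) thus ?case using st.ainv_step by blast
  qed
  thus ?thesis by (rule st.count)
qed


end
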